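(* Let $p$ be an odd prime and let $\mathcal{S}\subset\mathbb{A}^3$ be the affine surface over $\mathbb{F}_{p^2}$ defined by $y^p-y=x^{p+1}z^2+x^2z^{p+1}$. Then the number of affine $\mathbb{F}_{p^2}$-points is $$\#\mathcal{S}(\mathbb{F}_{p^2})=p\big(2(p-1)^3+2(p-1)^2+2p^2-1\big)=2p^4-2p^3+2p^2-p.$$ *)

theory Defs
  imports "HOL-Computational_Algebra.Primes"
begin

end

theory Submission
  imports Defs "HOL-Computational_Algebra.Primes" "HOL-Number_Theory.Residues" "HOL-Computational_Algebra.Polynomial"
begin

lemma fiber_count:
  assumes "finite A" "\<forall>b\<in>f`A. card {a\<in>A. f a = b} = k" "card (f`A) \<le> m" "k \<le> n"
    "card A = n*m" "0<n" "0<m"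
  shows "k = n \<and> card (f`A) = m"
proof -
  have "card A = (\<Sum>b\<in>f`A. card {a\<in>A. f a = b})"
    using sum.image_gen[OF assms(1), of "\<lambda>_. (1::nat)" f] by simp
  also have "\<dots> = (\<Sum>b\<in>f`A. k)" by (rule sum.cong) (use assms(2) in auto)
  also have "\<dots> = card (f`A) * k" by simp
  finally have e: "card (f`A) * k = n*m" using assms(5) by simp
  have "card (f`A) * k \<le> m * k" using assms(3) by simp
  also have "\<dots> \<le> m * n" using assms(4) by simp
  finally have "k = n"
  proof -
    { assume "k < n"
      hence "m * k < m * n" using assms(7) by simp
      moreover have "card (f`A) * k \<le> m * k" using assms(3) by simp
      moreover have "n*m = m*n" by simp
      ultimately have False using e by linarith }
    thus ?thesis using assms(4) by fastforce
  qed
  thus ?thesis using e assms by simp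
qed

lemma roots1:
  assumes "n \<ge> 2"
  shows "card {x::'a::field. x^n + c*x = 0} \<le> n"
proof -
  define q where "q = monom (1::'a) n + [:0, c:]"
  have pq: "poly q x = x^n + c*x" for x by (simp add: q_def poly_monom)
  have cq: "coeff q n = 1" using assms by (simp add: q_def coeff_monom coeff_pCons split: nat.split)
  hence "q \<noteq> 0" by auto
  have "degree q \<le> n" unfolding q_def
    by (rule degree_add_le) (use assms in \<open>auto simp: degree_monom_le degree_pCons_eq_if\<close>)
  thus ?thesis using card_poly_roots_bound[OF \<open>q\<noteq>0\<close>] pq by simp
qed

lemma roots2:
  assumes "n \<ge> 1"
  shows "card {x::'a::field. x^n = c} \<le> n"
proof -
  define q where "q = monom (1::'a) n - [:c:]"
  have pq: "poly q x = x^n - c" for x by (simp add: q_def poly_monom)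
  have cq: "coeff q n = 1" using assms by (simp add: q_def coeff_monom coeff_pCons split: nat.split)
  hence "q \<noteq> 0" by auto
  have "degree q \<le> n" unfolding q_def
    by (rule degree_diff_le) (use assms in \<open>auto simp: degree_monom_le\<close>)
  thus ?thesis using card_poly_roots_bound[OF \<open>q\<noteq>0\<close>] pq by simp
qed

context
  fixes p :: nat
  assumes pp: "prime p" and op: "odd p" and cardp: "card (UNIV :: ('a::{field,finite}) set) = p ^ 2"
begin

lemma CHARp: "CHAR('a) = p"
proof -
  have "CHAR('a) > 0" by (rule finite_imp_CHAR_pos) simp
  hence pc: "prime CHAR('a)" by (rule prime_CHAR_semidom)
  have "CHAR('a) dvd p^2" using CHAR_dvd_CARD[where 'a='a] cardp by simp
  hence "CHAR('a) dvd p" using pc prime_dvd_power by blast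
  thus ?thesis using pc pp by (simp add: primes_dvd_imp_eq)
qed

lemma frob_add: "((x::'a) + y)^p = x^p + y^p"
  by (rule freshmans_dream) (simp_all add: CHARp pp)

lemma frob_neg: "(- (x::'a))^p = - (x^p)"
  using op by simp

lemma frob_diff: "((x::'a) - y)^p = x^p - y^p"
  using frob_add[of x "-y"] frob_neg[of y] by simp

lemma pow_card: "(x::'a) ^ (p^2) = x"
proof (cases "x = 0")
  case False
  have "x * (\<Prod>y\<in>UNIV-{0}. x * y) = x * x ^ (card (UNIV :: 'a set) - 1) * \<Prod>(UNIV-{0})"
    by (simp add: prod.distrib mult_ac)
  also have "x * x ^ (card (UNIV :: 'a set) - 1) = x ^ Suc (card (UNIV :: 'a set) - 1)"
    by (subst power_Suc) auto
  also have "Suc (card (UNIV :: 'a set) - 1) = card (UNIV :: 'a set)"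
    using finite_UNIV_card_ge_0[where ?'a = 'a] by simp
  also have "(\<Prod>y\<in>UNIV-{0}. x * y) = (\<Prod>y\<in>UNIV-{0}. y)"
    by (rule prod.reindex_bij_witness[of _ "\<lambda>y. y / x" "\<lambda>y. x * y"]) (use False in auto)
  finally show ?thesis
    using cardp by simp
qed (use pp in \<open>auto simp: prime_gt_0_nat\<close>)

lemma p_ge3: "p \<ge> 3"
  using pp op prime_ge_2_nat[OF pp] by (metis dvd_refl le_antisym not_less_eq_eq numeral_2_eq_2 numeral_3_eq_3)

lemma frob_sq: "((x::'a)^p)^p = x"
  using pow_card[of x] by (simp add: power_mult[symmetric] power2_eq_square)

lemma T_add: "((k::'a) + y)^p - (k + y) = (k^p - k) + (y^p - y)"
  by (simp add: frob_add)

lemma T_image: "(y::'a)^p - y \<in> {w. w^p + w = 0}"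
  by (simp add: frob_diff frob_sq)

lemma fiberT_all:
  "card {y::'a. y^p - y = 0} = p \<and> (\<lambda>y::'a. y^p - y) ` UNIV = {w. w^p + w = 0}"
proof -
  define f where "f = (\<lambda>y::'a. y^p - y)"
  define K where "K = {y::'a. f y = 0}"
  have fib: "card {a\<in>UNIV. f a = b} = card K" if "b \<in> f`UNIV" for b
  proof -
    from that obtain y0 where b: "b = f y0" by blast
    have "{a\<in>UNIV. f a = b} = (\<lambda>k. k + y0) ` K"
    proof (intro Set.set_eqI iffI)
      fix a assume "a \<in> {a\<in>UNIV. f a = b}"
      hence "f (a - y0) = 0" using b by (simp add: f_def frob_diff algebra_simps)
      thus "a \<in> (\<lambda>k. k + y0) ` K" unfolding K_def by (auto intro!: image_eqI[of _ _ "a - y0"])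
    next
      fix a assume "a \<in> (\<lambda>k. k + y0) ` K"
      then obtain k where "a = k + y0" "f k = 0" unfolding K_def by auto
      thus "a \<in> {a\<in>UNIV. f a = b}" using T_add[of k y0] b by (simp add: f_def)
    qed
    also have "card \<dots> = card K" by (rule card_image) (simp add: inj_on_def)
    finally show ?thesis .
  qed
  have p3: "p \<ge> 3" by (rule p_ge3)
  have kb: "card K \<le> p" unfolding K_def f_def
    using roots1[of p "-1::'a"] p3 by simp
  have sub: "f`UNIV \<subseteq> {w. w^p + w = 0}" using T_image by (auto simp: f_def)
  have tb: "card {w::'a. w^p + w = 0} \<le> p" using roots1[of p "1::'a"] p3 by simp
  have ib: "card (f`UNIV) \<le> p" by (rule order_trans[OF card_mono[OF _ sub] tb]) simp
  have "card K = p \<and> card (f`UNIV) = p"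
    by (rule fiber_count[where A=UNIV and f=f and m=p and n=p])
       (use fib ib kb cardp p3 in \<open>simp_all add: power2_eq_square\<close>)
  moreover have "f`UNIV = {w. w^p + w = 0}"
    by (rule card_seteq) (use sub tb calculation in auto)
  ultimately show ?thesis unfolding K_def f_def by simp
qed

lemma fiberT: "card {y::'a. y^p - y = w} = (if w^p + w = 0 then p else 0)"
proof (cases "w^p + w = 0")
  case True
  hence "w \<in> (\<lambda>y::'a. y^p - y) ` UNIV" using fiberT_all by simp
  then obtain y0 :: 'a where w: "w = y0^p - y0" by auto
  have "{y::'a. y^p - y = w} = (\<lambda>k. k + y0) ` {y. y^p - y = 0}"
  proof (intro Set.set_eqI iffI)
    fix a assume "a \<in> {y::'a. y^p - y = w}"
    hence "(a - y0)^p - (a - y0) = 0" using w by (simp add: frob_diff algebra_simps)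
    thus "a \<in> (\<lambda>k. k + y0) ` {y. y^p - y = 0}" by (auto intro!: image_eqI[of _ _ "a - y0"])
  next
    fix a assume "a \<in> (\<lambda>k. k + y0) ` {y. y^p - y = 0}"
    then obtain k where "a = k + y0" "k^p - k = 0" by auto
    thus "a \<in> {y::'a. y^p - y = w}" using T_add[of k y0] w by simp
  qed
  also have "card \<dots> = p" using fiberT_all by (subst card_image) (auto simp: inj_on_def)
  finally show ?thesis using True by simp
next
  case False
  hence "{y::'a. y^p - y = w} = {}" using T_image by auto
  thus ?thesis using False by simp
qed

lemma pm1: "(p - 1) * (p + 1) = p^2 - 1"
proof -
  obtain q where "p = Suc q" using p_ge3 by (cases p) auto
  thus ?thesis by (simp add: power2_eq_square algebra_simps)
qed

lemma unit_pow: "(t::'a) \<noteq> 0 \<Longrightarrow> t ^ (p^2 - 1) = 1"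
proof -
  assume t: "t \<noteq> 0"
  have "p^2 \<ge> 1" using p_ge3 by simp
  hence "t * t^(p^2 - 1) = t^(p^2)" by (metis Suc_diff_1 not_one_le_zero not_gr0 power_Suc)
  also have "\<dots> = t" by (rule pow_card)
  finally show ?thesis using t by simp
qed

lemma M_image: "(t::'a) \<noteq> 0 \<Longrightarrow> (t^(p-1))^(p+1) = 1"
proof -
  assume t: "t \<noteq> 0"
  have "(t^(p-1))^(p+1) = t^((p-1)*(p+1))" by (rule power_mult[symmetric])
  also have "\<dots> = 1" unfolding pm1 by (rule unit_pow[OF t])
  finally show ?thesis .
qed

lemma fiberM_fib:
  assumes t0: "(t0::'a) \<noteq> 0"
  shows "{t::'a. t \<noteq> 0 \<and> t^(p-1) = t0^(p-1)} = (\<lambda>k. k * t0) ` {t. t \<noteq> 0 \<and> t^(p-1) = 1}"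
proof (intro Set.set_eqI iffI)
  fix a assume "a \<in> {t::'a. t \<noteq> 0 \<and> t^(p-1) = t0^(p-1)}"
  hence a: "a \<noteq> 0" "a^(p-1) = t0^(p-1)" by auto
  hence "(a/t0)^(p-1) = 1" using t0 by (simp add: power_divide)
  moreover have "a = (a/t0) * t0" using t0 by simp
  ultimately show "a \<in> (\<lambda>k. k * t0) ` {t. t \<noteq> 0 \<and> t^(p-1) = 1}"
    using a t0 by (auto intro!: image_eqI[of _ _ "a/t0"])
next
  fix a assume "a \<in> (\<lambda>k. k * t0) ` {t. t \<noteq> 0 \<and> t^(p-1) = 1}"
  then obtain k where "a = k * t0" "k \<noteq> 0" "k^(p-1) = 1" by auto
  thus "a \<in> {t::'a. t \<noteq> 0 \<and> t^(p-1) = t0^(p-1)}" using t0 by (simp add: power_mult_distrib)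
qed

lemma fiberM_all:
  "card {t::'a. t \<noteq> 0 \<and> t^(p-1) = 1} = p - 1 \<and> (\<lambda>t::'a. t^(p-1)) ` (UNIV - {0}) = {c. c^(p+1) = 1}"
proof -
  define f where "f = (\<lambda>t::'a. t^(p-1))"
  define K where "K = {t::'a. t \<noteq> 0 \<and> t^(p-1) = 1}"
  have p3: "p \<ge> 3" by (rule p_ge3)
  have fib: "card {a\<in>UNIV-{0}. f a = b} = card K" if "b \<in> f`(UNIV-{0})" for b
  proof -
    from that obtain t0 where b: "b = f t0" "t0 \<noteq> 0" by blast
    have "{a\<in>UNIV-{0}. f a = b} = {t::'a. t \<noteq> 0 \<and> t^(p-1) = t0^(p-1)}"
      using b by (auto simp: f_def)
    also have "\<dots> = (\<lambda>k. k * t0) ` K" unfolding K_def by (rule fiberM_fib[OF b(2)])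
    also have "card \<dots> = card K" by (rule card_image) (use b in \<open>simp add: inj_on_def\<close>)
    finally show ?thesis .
  qed
  have kb: "card K \<le> p - 1"
    by (rule order_trans[OF card_mono[of "{t::'a. t^(p-1) = 1}"] roots2]) (use p3 in \<open>auto simp: K_def\<close>)
  have sub: "f`(UNIV-{0}) \<subseteq> {c. c^(p+1) = 1}" using M_image by (auto simp: f_def)
  have tb: "card {c::'a. c^(p+1) = 1} \<le> p + 1" using roots2[of "p+1" "1::'a"] by simp
  have ib: "card (f`(UNIV-{0})) \<le> p + 1" by (rule order_trans[OF card_mono[OF _ sub] tb]) simp
  have cA: "card (UNIV - {0::'a}) = (p - 1) * (p + 1)"
    using cardp pm1 by (simp add: card_Diff_subset)
  have "card K = p - 1 \<and> card (f`(UNIV-{0})) = p + 1"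
    by (rule fiber_count[where A="UNIV-{0}" and f=f and m="p+1" and n="p-1"])
       (use fib ib kb cA p3 in simp_all)
  moreover have "f`(UNIV-{0}) = {c. c^(p+1) = 1}"
    by (rule card_seteq) (use sub tb calculation in auto)
  ultimately show ?thesis unfolding K_def f_def by simp
qed

lemma fiberM:
  assumes "(c::'a)^(p+1) = 1"
  shows "card {t::'a. t \<noteq> 0 \<and> t^(p-1) = c} = p - 1"
proof -
  have "c \<in> (\<lambda>t::'a. t^(p-1)) ` (UNIV - {0})" using fiberM_all assms by simp
  then obtain t0 where c: "c = t0^(p-1)" "t0 \<noteq> 0" by blast
  have "{t::'a. t \<noteq> 0 \<and> t^(p-1) = c} = (\<lambda>k. k * t0) ` {t. t \<noteq> 0 \<and> t^(p-1) = 1}"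
    unfolding c(1) by (rule fiberM_fib[OF c(2)])
  also have "card \<dots> = p - 1" using fiberM_all c(2) by (subst card_image) (auto simp: inj_on_def)
  finally show ?thesis .
qed

lemma trace_eq:
  fixes x z :: 'a
  defines "F \<equiv> x ^ (p + 1) * z ^ 2 + x ^ 2 * z ^ (p + 1)"
  shows "F^p + F = x^2*z^2*(x^(p-1)+z^(p-1))*(1 + x^(p-1)*z^(p-1))"
proof -
  have p3: "p \<ge> 3" by (rule p_ge3)
  have e1: "F^p = (x^(p+1))^p*(z^2)^p + (x^2)^p*(z^(p+1))^p"
    unfolding F_def by (simp add: frob_add power_mult_distrib)
  have sp: "y^p = y * y^(p-1)" for y :: 'a using p3 by (cases p) auto
  have s1: "y^(p+1) = y^p * y" for y :: 'a by simp
  have s2: "(y^(p+1))^p = y * y^p" for y :: 'a unfolding s1 power_mult_distrib frob_sq by simp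
  have s3: "(y^2)^p = (y^p)^2" for y :: 'a by (metis power_mult mult.commute)
  have "F^p + F = x * x^p * (z^p)^2 + (x^p)^2 * (z * z^p) + F" unfolding e1 s2 s3 ..
  also have "\<dots> = x^2*z^2*(x^(p-1)+z^(p-1))*(1 + x^(p-1)*z^(p-1))"
    unfolding F_def s1 sp[of x] sp[of z] by (simp add: algebra_simps power2_eq_square)
  finally show ?thesis .
qed

lemma card_S:
  "card {(x, y, z). (y::'a) ^ p - y = x ^ (p + 1) * z ^ 2 + x ^ 2 * z ^ (p + 1)}
   = p * card {(x, z). (x::'a)^2*z^2*(x^(p-1)+z^(p-1))*(1 + x^(p-1)*z^(p-1)) = 0}"
proof -
  define F where "F = (\<lambda>x z::'a. x ^ (p + 1) * z ^ 2 + x ^ 2 * z ^ (p + 1))"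
  define H where "H = (\<lambda>x z::'a. x^2*z^2*(x^(p-1)+z^(p-1))*(1 + x^(p-1)*z^(p-1)))"
  have "{(x, y, z). (y::'a) ^ p - y = x ^ (p + 1) * z ^ 2 + x ^ 2 * z ^ (p + 1)}
      = (\<lambda>((x,z),y). (x,y,z)) ` (SIGMA xz:UNIV. {y. y^p - y = F (fst xz) (snd xz)})"
    by (auto simp: F_def image_iff)
  also have "card \<dots> = card (SIGMA xz:(UNIV::('a\<times>'a) set). {y. y^p - y = F (fst xz) (snd xz)})"
    by (rule card_image) (auto simp: inj_on_def)
  also have "\<dots> = (\<Sum>xz\<in>UNIV. card {y. y^p - y = F (fst xz) (snd xz)})" by simp
  also have "\<dots> = (\<Sum>xz\<in>UNIV. if H (fst xz) (snd xz) = 0 then p else 0)"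
    by (rule sum.cong) (auto simp: fiberT H_def F_def trace_eq simp del: One_nat_def)
  also have "\<dots> = (\<Sum>xz\<in>{xz. H (fst xz) (snd xz) = 0}. p)"
    using sum.inter_filter[of UNIV "\<lambda>_. p" "\<lambda>xz. H (fst xz) (snd xz) = 0"] by simp
  also have "\<dots> = p * card {(x, z). H x z = 0}" by (simp add: case_prod_beta')
  finally show ?thesis unfolding H_def .
qed

lemma one_neq_m1: "(1::'a) \<noteq> -1"
proof
  assume h: "(1::'a) = -1"
  have "(1::'a) + 1 = 0" by (subst (2) h) simp
  hence "(of_nat 2::'a) = 0" by simp
  hence "p dvd 2" using of_nat_eq_0_iff_char_dvd[of 2, where 'a='a] CHARp by simp
  thus False using p_ge3 dvd_imp_le[of p 2] by simp
qed

lemma even_p1: "(-1::'a)^(p+1) = 1"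
  using op by simp

lemma card_x:
  assumes x: "(x::'a) \<noteq> 0"
  shows "card {z::'a. x^2*z^2*(x^(p-1)+z^(p-1))*(1 + x^(p-1)*z^(p-1)) = 0}
          + (if x^(p-1)*x^(p-1) = 1 then p - 1 else 0) = 2*p - 1"
proof -
  define a where "a = x^(p-1)"
  have a0: "a \<noteq> 0" using x by (simp add: a_def)
  have aU: "a^(p+1) = 1" unfolding a_def by (rule M_image[OF x])
  define B1 where "B1 = {z::'a. z \<noteq> 0 \<and> z^(p-1) = -a}"
  define B2 where "B2 = {z::'a. z \<noteq> 0 \<and> z^(p-1) = -1/a}"
  have c1: "card B1 = p - 1" unfolding B1_def
    by (rule fiberM) (use aU op in \<open>simp add: power_minus'\<close>)
  have c2: "card B2 = p - 1" unfolding B2_def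
    by (rule fiberM) (use aU op in \<open>simp add: power_minus' power_divide\<close>)
  have eq: "{z::'a. x^2*z^2*(x^(p-1)+z^(p-1))*(1 + x^(p-1)*z^(p-1)) = 0} = insert 0 (B1 \<union> B2)"
  proof (intro Set.set_eqI iffI)
    fix z assume "z \<in> {z::'a. x^2*z^2*(x^(p-1)+z^(p-1))*(1 + x^(p-1)*z^(p-1)) = 0}"
    hence "z = 0 \<or> a + z^(p-1) = 0 \<or> 1 + a * z^(p-1) = 0" using x by (simp add: a_def)
    moreover have "z^(p-1) = -1/a" if h: "1 + a * z^(p-1) = 0"
    proof -
      have "a * z^(p-1) = -1" using h by (simp add: eq_neg_iff_add_eq_0 add.commute)
      thus ?thesis using a0 by (simp add: field_simps)
    qed
    moreover have "a + z^(p-1) = 0 \<Longrightarrow> z^(p-1) = -a" by (simp add: add_eq_0_iff2)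
    ultimately show "z \<in> insert 0 (B1 \<union> B2)" unfolding B1_def B2_def by auto
  next
    fix z assume "z \<in> insert 0 (B1 \<union> B2)"
    moreover have "z^(p-1) = -1/a \<Longrightarrow> 1 + a * z^(p-1) = 0" using a0 by simp
    ultimately show "z \<in> {z::'a. x^2*z^2*(x^(p-1)+z^(p-1))*(1 + x^(p-1)*z^(p-1)) = 0}"
      unfolding B1_def B2_def a_def[symmetric] using p_ge3 by auto
  qed
  have fin: "finite B1" "finite B2" by simp_all
  have n0: "0 \<notin> B1 \<union> B2" by (simp add: B1_def B2_def)
  have ci: "card (B1 \<union> B2) + card (B1 \<inter> B2) = card B1 + card B2" using card_Un_Int[of B1 B2] by simp
  have int: "B1 \<inter> B2 = (if a*a = 1 then B1 else {})"
  proof (cases "a*a = 1")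
    case True
    hence "-1/a = -a" using a0 by (simp add: field_simps)
    thus ?thesis using True unfolding B1_def B2_def by auto
  next
    case False
    hence "-1/a \<noteq> -a" using a0 by (auto simp: field_simps)
    thus ?thesis using False unfolding B1_def B2_def by auto
  qed
  have ct: "card {z::'a. x^2*z^2*(a+z^(p-1))*(1 + a*z^(p-1)) = 0} = Suc (card (B1 \<union> B2))"
    by (subst eq[unfolded a_def[symmetric]]) (use n0 in simp)
  show ?thesis unfolding a_def[symmetric] ct using ci int c1 c2 p_ge3
    by (cases "a*a = 1") auto
qed

lemma card_E: "card {x::'a. x \<noteq> 0 \<and> x^(p-1)*x^(p-1) = 1} = 2*(p-1)"
proof -
  have "{x::'a. x \<noteq> 0 \<and> x^(p-1)*x^(p-1) = 1} = {x. x \<noteq> 0 \<and> x^(p-1) = 1} \<union> {x. x \<noteq> 0 \<and> x^(p-1) = -1}"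
    by (auto simp: square_eq_1_iff)
  also have "card \<dots> = card {x::'a. x \<noteq> 0 \<and> x^(p-1) = 1} + card {x::'a. x \<noteq> 0 \<and> x^(p-1) = -1}"
    by (rule card_Un_disjoint) (use one_neq_m1 in auto)
  also have "\<dots> = 2*(p-1)" using fiberM[of 1] fiberM[of "-1"] even_p1 by simp
  finally show ?thesis .
qed

lemma card_Z:
  "card {(x, z). (x::'a)^2*z^2*(x^(p-1)+z^(p-1))*(1 + x^(p-1)*z^(p-1)) = 0}
   = 2 * (p - 1) ^ 3 + 2 * (p - 1) ^ 2 + 2 * p ^ 2 - 1"
proof -
  define G where "G = (\<lambda>x::'a. {z::'a. x^2*z^2*(x^(p-1)+z^(p-1))*(1 + x^(p-1)*z^(p-1)) = 0})"
  define P where "P = (\<lambda>x::'a. x^(p-1)*x^(p-1) = 1)"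
  have "{(x, z). (x::'a)^2*z^2*(x^(p-1)+z^(p-1))*(1 + x^(p-1)*z^(p-1)) = 0} = (SIGMA x:UNIV. G x)"
    by (auto simp: G_def)
  hence "card {(x, z). (x::'a)^2*z^2*(x^(p-1)+z^(p-1))*(1 + x^(p-1)*z^(p-1)) = 0} = (\<Sum>x\<in>UNIV. card (G x))"
    by simp
  also have "\<dots> = card (G 0) + (\<Sum>x\<in>UNIV-{0}. card (G x))"
    by (rule sum.remove) simp_all
  also have "G 0 = UNIV" using p_ge3 by (simp add: G_def)
  finally have t: "card {(x, z). (x::'a)^2*z^2*(x^(p-1)+z^(p-1))*(1 + x^(p-1)*z^(p-1)) = 0}
     = p^2 + (\<Sum>x\<in>UNIV-{0}. card (G x))" using cardp by simp
  have "(\<Sum>x\<in>UNIV-{0}. card (G x)) + (\<Sum>x\<in>UNIV-{0}. if P x then p - 1 else 0)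
      = (\<Sum>x\<in>UNIV-{0::'a}. 2*p - 1)"
    unfolding sum.distrib[symmetric]
    apply (rule sum.cong[OF refl])
    subgoal for x using card_x[of x] by (simp add: G_def P_def)
    done
  also have "\<dots> = (p^2 - 1) * (2*p - 1)" using cardp by (simp add: card_Diff_subset)
  finally have s1: "(\<Sum>x\<in>UNIV-{0}. card (G x)) + (\<Sum>x\<in>UNIV-{0}. if P x then p - 1 else 0)
      = (p^2 - 1) * (2*p - 1)" .
  have "(\<Sum>x\<in>UNIV-{0::'a}. if P x then p - 1 else 0) = (\<Sum>x\<in>{x\<in>UNIV-{0::'a}. P x}. p - 1)"
    by (rule sum.inter_filter[symmetric]) simp
  also have "{x\<in>UNIV-{0::'a}. P x} = {x::'a. x \<noteq> 0 \<and> x^(p-1)*x^(p-1) = 1}" by (auto simp: P_def)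
  also have "(\<Sum>x\<in>{x::'a. x \<noteq> 0 \<and> x^(p-1)*x^(p-1) = 1}. p - 1) = 2*(p-1)*(p-1)" using card_E by simp
  finally have s2: "(\<Sum>x\<in>UNIV-{0::'a}. if P x then p - 1 else 0) = 2*(p-1)*(p-1)" .
  obtain q where q: "p = q + 1" using p_ge3 by (metis add.commute le_Suc_ex le_trans one_le_numeral plus_1_eq_Suc)
  define N where "N = (\<Sum>x\<in>UNIV-{0::'a}. card (G x))"
  have "N + 2*q*q = (q*q + 2*q)*(2*q+1)" using s1 s2 unfolding N_def q
    by (simp add: power2_eq_square algebra_simps)
  hence "int N + 2*int q*int q = (int q*int q + 2*int q)*(2*int q+1)" by (metis (mono_tags) of_nat_add of_nat_mult of_nat_numeral of_nat_1)
  hence "int (p^2 + N) = int (2 * (p - 1) ^ 3 + 2 * (p - 1) ^ 2 + 2 * p ^ 2 - 1)"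
    unfolding q by (simp add: of_nat_diff power2_eq_square power3_eq_cube algebra_simps)
  hence "p^2 + N = 2 * (p - 1) ^ 3 + 2 * (p - 1) ^ 2 + 2 * p ^ 2 - 1" by (simp only: of_nat_eq_iff)
  thus ?thesis using t unfolding N_def by simp
qed

end

theorem proposition4p3:
  fixes p :: nat
  assumes "prime p" and "odd p"
    and "card (UNIV :: ('a::{field,finite}) set) = p ^ 2"
  shows "card {(x, y, z). (y::'a) ^ p - y = x ^ (p + 1) * z ^ 2 + x ^ 2 * z ^ (p + 1)}
         = p * (2 * (p - 1) ^ 3 + 2 * (p - 1) ^ 2 + 2 * p ^ 2 - 1)"
  using card_S[OF assms] card_Z[OF assms] by simp

end
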